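(* Let $G$ be a (nonempty) complete graph whose vertices are each colored $A$, $B$ or $C$. The value of the Normal Partizan Domination game on $G$ is $1$ if every vertex has color $A$, is $-1$ if every vertex has color $B$, and is $*$ otherwise.
   Context: Normal Partizan Domination game: a finite graph $G$ has each vertex colored $A$, $B$ or $C$. Alice and Bob alternately select a vertex; Alice may only select vertices colored $A$ or $C$, Bob only vertices colored $B$ or $C$. A vertex $u$ dominates $v$ if $u=v$ or $uv$ is an edge. A vertex may be selected only if it is playable, i.e. it dominates at least one vertex not dominated by the previously selected vertices; the game ends when the selected vertices form a dominating set. Under normal play the player unable to move loses. The game is regarded as a partizan combinatorial game with Alice as Left and Bob as Right, and its value is its value in Conway's combinatorial game theory ($\{X\mid Y\}$ has Left options $X$ and Right options $Y$; $G=H$ iff $G+(-H)$ is a second-player win). Here $1=\{0\mid\}$, $-1=\{\mid 0\}$, $*=\{0\mid 0\}$, $0=\{\mid\}$. *)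

theory Defs
  imports Main
begin

datatype game = Game "game list" "game list"

primrec neg :: "game \<Rightarrow> game" where
  "neg (Game L R) = Game (map neg R) (map neg L)"

function gplus :: "game \<Rightarrow> game \<Rightarrow> game" where
  "gplus (Game L1 R1) (Game L2 R2) =
     Game (map (\<lambda>x. gplus x (Game L2 R2)) L1 @ map (\<lambda>y. gplus (Game L1 R1) y) L2)
          (map (\<lambda>x. gplus x (Game L2 R2)) R1 @ map (\<lambda>y. gplus (Game L1 R1) y) R2)"
  by pat_completeness auto
termination
  by (relation "measure (\<lambda>(x, y). size x + size y)")
     (auto dest!: size_list_estimation' [where f = size and y = "size _", OF _ order_refl] )

text \<open>Normal play: (Left moving first wins, Right moving first wins).\<close>
primrec first_wins :: "game \<Rightarrow> bool \<times> bool" where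
  "first_wins (Game L R) =
     ((\<exists>b \<in> set (map (\<lambda>x. snd (first_wins x)) L). \<not> b),
      (\<exists>b \<in> set (map (\<lambda>x. fst (first_wins x)) R). \<not> b))"

definition second_player_win :: "game \<Rightarrow> bool" where
  "second_player_win G \<longleftrightarrow> \<not> fst (first_wins G) \<and> \<not> snd (first_wins G)"

definition game_eq :: "game \<Rightarrow> game \<Rightarrow> bool" where
  "game_eq G H \<longleftrightarrow> second_player_win (gplus G (neg H))"

definition g_zero :: game where "g_zero = Game [] []"
definition g_one :: game where "g_one = Game [g_zero] []"
definition g_minus_one :: game where "g_minus_one = Game [] [g_zero]"
definition g_star :: game where "g_star = Game [g_zero] [g_zero]"

datatype color = CA | CB | CC

definition cnbhd :: "'a list \<Rightarrow> ('a \<Rightarrow> 'a \<Rightarrow> bool) \<Rightarrow> 'a \<Rightarrow> 'a set" where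
  "cnbhd vs E v = {u \<in> set vs. u = v \<or> E v u}"

text \<open>Game position: D = set of vertices dominated by the previously selected vertices.
  A vertex is playable iff it dominates a vertex not in D.\<close>
function dom_pos :: "'a list \<Rightarrow> ('a \<Rightarrow> 'a \<Rightarrow> bool) \<Rightarrow> ('a \<Rightarrow> color) \<Rightarrow> 'a set \<Rightarrow> game" where
  "dom_pos vs E c D =
     Game (map (\<lambda>v. dom_pos vs E c (D \<union> cnbhd vs E v))
               (filter (\<lambda>v. c v \<noteq> CB \<and> \<not> cnbhd vs E v \<subseteq> D) vs))
          (map (\<lambda>v. dom_pos vs E c (D \<union> cnbhd vs E v))
               (filter (\<lambda>v. c v \<noteq> CA \<and> \<not> cnbhd vs E v \<subseteq> D) vs))"
  by pat_completeness auto
termination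
proof (relation "measure (\<lambda>(vs, E, c, D). card (set vs - D))", goal_cases)
  case 1 show ?case by simp
next
  case (2 vs E c D v)
  have "set vs - (D \<union> cnbhd vs E v) \<subset> set vs - D"
    using 2 by (auto simp: cnbhd_def)
  then show ?case by (simp add: psubset_card_mono)
next
  case (3 vs E c D v)
  have "set vs - (D \<union> cnbhd vs E v) \<subset> set vs - D"
    using 3 by (auto simp: cnbhd_def)
  then show ?case by (simp add: psubset_card_mono)
qed

text \<open>The list enumerating V
  only fixes an order of options, which does not affect the game's value.\<close>
definition domination_game :: "'a set \<Rightarrow> ('a \<Rightarrow> 'a \<Rightarrow> bool) \<Rightarrow> ('a \<Rightarrow> color) \<Rightarrow> game" where
  "domination_game V E c = dom_pos (SOME vs. distinct vs \<and> set vs = V) E c {}"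

end

theory Submission
  imports Defs
begin

declare dom_pos.simps [simp del]

lemma dp_full:
  "dom_pos vs E c (set vs) = Game [] []"
  by (subst dom_pos.simps) (auto simp: cnbhd_def filter_empty_conv)

lemma dp_start:
  assumes "\<And>v. v \<in> set vs \<Longrightarrow> cnbhd vs E v = set vs"
  shows "dom_pos vs E c {} = Game (map (\<lambda>_. Game [] []) (filter (\<lambda>v. c v \<noteq> CB) vs))
                                 (map (\<lambda>_. Game [] []) (filter (\<lambda>v. c v \<noteq> CA) vs))"
proof -
  have ne: "\<And>v. v \<in> set vs \<Longrightarrow> \<not> cnbhd vs E v \<subseteq> {}" using assms by auto
  have "filter (\<lambda>v. c v \<noteq> CB \<and> \<not> cnbhd vs E v \<subseteq> {}) vs = filter (\<lambda>v. c v \<noteq> CB) vs"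
    using ne by (intro filter_cong) auto
  moreover have "filter (\<lambda>v. c v \<noteq> CA \<and> \<not> cnbhd vs E v \<subseteq> {}) vs = filter (\<lambda>v. c v \<noteq> CA) vs"
    using ne by (intro filter_cong) auto
  moreover have "\<forall>x\<in>set vs. dom_pos vs E c (cnbhd vs E x) = Game [] []"
    using assms by (auto simp: dp_full)
  ultimately show ?thesis
    by (subst dom_pos.simps) simp
qed

theorem proposition3:
  fixes V :: "'a set" and E :: "'a \<Rightarrow> 'a \<Rightarrow> bool" and c :: "'a \<Rightarrow> color"
  assumes "finite V" and "V \<noteq> {}"
    and "\<And>u v. E u v \<Longrightarrow> E v u"
    and "\<And>v. \<not> E v v"
    and "\<And>u v. E u v \<Longrightarrow> u \<in> V \<and> v \<in> V"
    and "\<And>u v. u \<in> V \<Longrightarrow> v \<in> V \<Longrightarrow> u \<noteq> v \<Longrightarrow> E u v"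
  shows "((\<forall>v\<in>V. c v = CA) \<longrightarrow> game_eq (domination_game V E c) g_one)
       \<and> ((\<forall>v\<in>V. c v = CB) \<longrightarrow> game_eq (domination_game V E c) g_minus_one)
       \<and> ((\<not> (\<forall>v\<in>V. c v = CA) \<and> \<not> (\<forall>v\<in>V. c v = CB)) \<longrightarrow> game_eq (domination_game V E c) g_star)"
proof -
  define vs where "vs = (SOME vs. distinct vs \<and> set vs = V)"
  have "\<exists>vs. distinct vs \<and> set vs = V" using assms(1) finite_distinct_list by blast
  then have sv: "set vs = V" unfolding vs_def by (metis (mono_tags, lifting) someI_ex)
  have cn: "\<And>v. v \<in> set vs \<Longrightarrow> cnbhd vs E v = set vs"
    using assms(6) sv by (auto simp: cnbhd_def)
  have dg: "domination_game V E c = Game (map (\<lambda>_. Game [] []) (filter (\<lambda>v. c v \<noteq> CB) vs))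
                                 (map (\<lambda>_. Game [] []) (filter (\<lambda>v. c v \<noteq> CA) vs))"
    unfolding domination_game_def vs_def[symmetric] using dp_start[OF cn] by simp
  show ?thesis
  proof (intro conjI impI)
    assume a: "\<forall>v\<in>V. c v = CA"
    then have "filter (\<lambda>v. c v \<noteq> CA) vs = []" using sv by (auto simp: filter_empty_conv)
    moreover have "filter (\<lambda>v. c v \<noteq> CB) vs \<noteq> []" using a sv assms(2) by (auto simp: filter_empty_conv)
    ultimately show "game_eq (domination_game V E c) g_one" unfolding dg
      by (simp add: game_eq_def second_player_win_def g_one_def g_zero_def comp_def; auto simp: filter_empty_conv)
  next
    assume a: "\<forall>v\<in>V. c v = CB"
    then have "filter (\<lambda>v. c v \<noteq> CB) vs = []" using sv by (auto simp: filter_empty_conv)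
    moreover have "filter (\<lambda>v. c v \<noteq> CA) vs \<noteq> []" using a sv assms(2) by (auto simp: filter_empty_conv)
    ultimately show "game_eq (domination_game V E c) g_minus_one" unfolding dg
      by (simp add: game_eq_def second_player_win_def g_minus_one_def g_zero_def comp_def; auto simp: filter_empty_conv)
  next
    assume a: "\<not> (\<forall>v\<in>V. c v = CA) \<and> \<not> (\<forall>v\<in>V. c v = CB)"
    then have "filter (\<lambda>v. c v \<noteq> CB) vs \<noteq> []" "filter (\<lambda>v. c v \<noteq> CA) vs \<noteq> []"
      using sv by (auto simp: filter_empty_conv)
    then show "game_eq (domination_game V E c) g_star" unfolding dg
      by (simp add: game_eq_def second_player_win_def g_star_def g_zero_def comp_def; auto simp: filter_empty_conv)
  qed
qed

end
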